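(* Let $G$ be a simple, undirected, connected graph on $N$ vertices with edge set $E$ and degree sequence $d_1\le d_2\le\cdots\le d_N$. If $d_j=1$ for $1\le j\le M$, where $M<N$, then $$R^+(G)\ge N(N-4)+2|E|\left[M+\frac{(N-M)^2}{2|E|-M}\right].$$
   Context: For vertices $i,j$ of $G$, $R_{ij}$ denotes the effective resistance between $i$ and $j$ when every edge of $G$ is a unit resistor. The additive degree-Kirchhoff index is $R^+(G)=\sum_{i<j}(d_i+d_j)R_{ij}$, where $d_i$ is the degree of vertex $i$. *)

theory Defs
  imports Main "HOL-Library.Disjoint_Sets" Complex_Main
begin

definition simple_graph :: "'a set \<Rightarrow> 'a set set \<Rightarrow> bool" where
  "simple_graph V E \<longleftrightarrow> finite V \<and>
     (\<forall>e\<in>E. \<exists>x y. e = {x, y} \<and> x \<noteq> y \<and> x \<in> V \<and> y \<in> V)"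

definition adj :: "'a set set \<Rightarrow> 'a \<Rightarrow> 'a \<Rightarrow> bool" where
  "adj E x y \<longleftrightarrow> {x, y} \<in> E"

definition connected_graph :: "'a set \<Rightarrow> 'a set set \<Rightarrow> bool" where
  "connected_graph V E \<longleftrightarrow> (\<forall>x\<in>V. \<forall>y\<in>V. (adj E)\<^sup>*\<^sup>* x y)"

definition neighbors :: "'a set set \<Rightarrow> 'a \<Rightarrow> 'a set" where
  "neighbors E x = {y. {x, y} \<in> E}"

definition degree :: "'a set set \<Rightarrow> 'a \<Rightarrow> nat" where
  "degree E x = card (neighbors E x)"

definition laplacian :: "'a set set \<Rightarrow> ('a \<Rightarrow> real) \<Rightarrow> 'a \<Rightarrow> real" where
  "laplacian E v x = real (degree E x) * v x - (\<Sum>y\<in>neighbors E x. v y)"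

text \<open>Effective resistance (unit resistors): inject unit current at i, extract it at j;
  R_ij is the resulting potential difference v_i - v_j, where L v = e_i - e_j on V.
  For a connected graph this is well defined (v unique up to an additive constant).\<close>
definition eff_res :: "'a set \<Rightarrow> 'a set set \<Rightarrow> 'a \<Rightarrow> 'a \<Rightarrow> real" where
  "eff_res V E i j = (THE r. \<exists>v. (\<forall>x\<in>V. laplacian E v x =
        (if x = i then 1 else 0) - (if x = j then 1 else 0)) \<and> r = v i - v j)"

definition additive_degree_kirchhoff :: "('a::linorder) set \<Rightarrow> 'a set set \<Rightarrow> real" where
  "additive_degree_kirchhoff V E =
     (\<Sum>(i, j)\<in>{(i, j). i \<in> V \<and> j \<in> V \<and> i < j}.
        real (degree E i + degree E j) * eff_res V E i j)"

end

theory Submission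
  imports Defs "Jordan_Normal_Form.Determinant"
begin

hide_const (open) Polynomial.degree


locale sg =
  fixes V :: "'a set" and E :: "'a set set"
  assumes sgr: "simple_graph V E"
begin

abbreviation "N \<equiv> neighbors E"

lemma finV: "finite V" using sgr by (simp add: simple_graph_def)

lemma edge_in: "{x, y} \<in> E \<Longrightarrow> x \<in> V \<and> y \<in> V \<and> x \<noteq> y"
proof -
  assume "{x,y} \<in> E"
  then obtain a b where "{x,y} = {a,b}" "a \<noteq> b" "a \<in> V" "b \<in> V"
    using sgr unfolding simple_graph_def by blast
  then show ?thesis by (auto simp: doubleton_eq_iff)
qed

lemma nb_sub: "N x \<subseteq> V" using edge_in by (auto simp: neighbors_def)
lemma nb_fin: "finite (N x)" using nb_sub finV finite_subset by blast
lemma nb_irr: "x \<notin> N x" using edge_in[of x x] by (auto simp: neighbors_def)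
lemma nb_sym: "y \<in> N x \<longleftrightarrow> x \<in> N y" by (auto simp: neighbors_def insert_commute)
lemma nb_V: "y \<in> N x \<Longrightarrow> x \<in> V" using edge_in by (auto simp: neighbors_def)

lemma lap_alt: "laplacian E v x = (\<Sum>y\<in>N x. v x - v y)"
  by (simp add: laplacian_def Defs.degree_def sum_subtractf)

lemma swap_nb: "(\<Sum>x\<in>V. \<Sum>y\<in>N x. f x y) = (\<Sum>x\<in>V. \<Sum>y\<in>N x. f y x)"
proof -
  have e1: "N x = {y. y \<in> V \<and> y \<in> N x}" for x using nb_sub by auto
  have e2: "{x. x \<in> V \<and> y \<in> N x} = N y" if "y \<in> V" for y using nb_sym nb_V by auto
  have "(\<Sum>x\<in>V. \<Sum>y\<in>N x. f x y) = (\<Sum>x\<in>V. \<Sum>y\<in>{y. y \<in> V \<and> y \<in> N x}. f x y)"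
    using e1 by simp
  also have "\<dots> = (\<Sum>y\<in>V. \<Sum>x\<in>{x. x \<in> V \<and> y \<in> N x}. f x y)"
    by (rule sum.swap_restrict[OF finV finV])
  also have "\<dots> = (\<Sum>y\<in>V. \<Sum>x\<in>N y. f x y)"
    by (rule sum.cong) (auto simp: e2)
  finally show ?thesis .
qed

definition Q :: "('a \<Rightarrow> real) \<Rightarrow> ('a \<Rightarrow> real) \<Rightarrow> real" where
  "Q u v = (\<Sum>x\<in>V. u x * laplacian E v x)"

lemma Qform: "Q u v = (\<Sum>x\<in>V. \<Sum>y\<in>N x. (u x - u y) * (v x - v y)) / 2"
proof -
  have A: "Q u v = (\<Sum>x\<in>V. \<Sum>y\<in>N x. u x * (v x - v y))"
    by (simp add: Q_def lap_alt sum_distrib_left)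
  also have "\<dots> = (\<Sum>x\<in>V. \<Sum>y\<in>N x. u y * (v y - v x))"
    by (rule swap_nb)
  finally have B: "Q u v = (\<Sum>x\<in>V. \<Sum>y\<in>N x. u y * (v y - v x))" .
  have "2 * Q u v = (\<Sum>x\<in>V. \<Sum>y\<in>N x. u x * (v x - v y) + u y * (v y - v x))"
    using A B by (simp add: sum.distrib)
  also have "\<dots> = (\<Sum>x\<in>V. \<Sum>y\<in>N x. (u x - u y) * (v x - v y))"
    by (intro sum.cong refl) (simp add: algebra_simps)
  finally show ?thesis by simp
qed

lemma Q_sym: "Q u v = Q v u"
  unfolding Qform by (intro arg_cong[where f="\<lambda>z. z/2"] sum.cong refl) (simp add: algebra_simps)

lemma Q_nonneg: "Q u u \<ge> 0"
  unfolding Qform by (intro divide_nonneg_pos sum_nonneg) auto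

lemma lap_lin: "laplacian E (\<lambda>x. u x - s * v x) x = laplacian E u x - s * laplacian E v x"
proof -
  have "laplacian E (\<lambda>x. u x - s * v x) x = (\<Sum>y\<in>N x. (u x - u y) - s * (v x - v y))"
    unfolding lap_alt by (rule sum.cong) (auto simp: algebra_simps)
  moreover have "(\<Sum>y\<in>N x. (u x - u y) - s * (v x - v y)) = (\<Sum>y\<in>N x. u x - u y) - s * (\<Sum>y\<in>N x. v x - v y)"
    by (simp only: sum_subtractf[of "\<lambda>y. u x - u y"] sum_distrib_left)
  ultimately show ?thesis unfolding lap_alt by simp
qed

lemma Q_expand: "Q (\<lambda>x. u x - s * v x) (\<lambda>x. u x - s * v x) = Q u u - 2 * s * Q u v + s^2 * Q v v"
proof -
  have "Q (\<lambda>x. u x - s * v x) (\<lambda>x. u x - s * v x) = Q u u - s * Q v u - s * Q u v + s^2 * Q v v"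
    unfolding Q_def lap_lin
    by (simp add: algebra_simps sum.distrib sum_subtractf sum_distrib_left power2_eq_square)
  then show ?thesis using Q_sym[of v u] by simp
qed

lemma harmonic_const:
  assumes "\<forall>x\<in>V. laplacian E u x = 0" "x \<in> V" "y \<in> N x"
  shows "u x = u y"
proof -
  have "Q u u = 0" using assms(1) by (simp add: Q_def)
  then have "(\<Sum>x\<in>V. \<Sum>y\<in>N x. (u x - u y) * (u x - u y)) = 0" by (simp add: Qform)
  then have "\<forall>x\<in>V. (\<Sum>y\<in>N x. (u x - u y) * (u x - u y)) = 0"
    by (subst (asm) sum_nonneg_eq_0_iff) (auto intro: sum_nonneg simp: finV)
  then have "\<forall>x\<in>V. \<forall>y\<in>N x. (u x - u y) * (u x - u y) = 0"
    by (auto simp: sum_nonneg_eq_0_iff nb_fin)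
  then show ?thesis using assms(2,3) by auto
qed

end

locale cg = sg +
  assumes conn: "connected_graph V E"
begin

lemma harmonic_const2:
  assumes "\<forall>x\<in>V. laplacian E u x = 0" "x \<in> V" "y \<in> V"
  shows "u x = u y"
proof -
  have "(adj E)\<^sup>*\<^sup>* x y" using conn assms(2,3) by (simp add: connected_graph_def)
  then show ?thesis
  proof (induction rule: rtranclp_induct)
    case base then show ?case by simp
  next
    case (step y z)
    then have "z \<in> N y" "y \<in> V" by (auto simp: adj_def neighbors_def dest: edge_in)
    then show ?case using step harmonic_const[OF assms(1)] by metis
  qed
qed

end




context cg begin

lemma sum_lap: "(\<Sum>x\<in>V. laplacian E v x) = 0"
proof -
  have "(\<Sum>x\<in>V. laplacian E v x) = Q (\<lambda>_. 1) v" by (simp add: Q_def)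
  also have "\<dots> = 0" by (simp add: Qform)
  finally show ?thesis .
qed

definition Tf :: "('a \<Rightarrow> real) \<Rightarrow> 'a \<Rightarrow> real" where
  "Tf v x = laplacian E v x + (\<Sum>y\<in>V. v y)"

definition cf :: "'a \<Rightarrow> 'a \<Rightarrow> real" where
  "cf x y = (if x = y then real (degree E x) else 0) - (if y \<in> N x then 1 else 0) + 1"

lemma cf_sum: assumes "x \<in> V" shows "(\<Sum>y\<in>V. cf x y * v y) = Tf v x"
proof -
  have "(\<Sum>y\<in>V. cf x y * v y) = (\<Sum>y\<in>V. (if x = y then real (degree E x) * v y else 0))
      - (\<Sum>y\<in>V. (if y \<in> N x then v y else 0)) + (\<Sum>y\<in>V. v y)"
  proof -
    have "(\<Sum>y\<in>V. cf x y * v y) = (\<Sum>y\<in>V. (if x = y then real (degree E x) * v y else 0)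
      - (if y \<in> N x then v y else 0) + v y)"
      by (rule sum.cong) (auto simp: cf_def algebra_simps)
    then show ?thesis by (simp only: sum.distrib sum_subtractf)
  qed
  also have "(\<Sum>y\<in>V. (if y \<in> N x then v y else 0)) = (\<Sum>y\<in>N x. v y)"
    using nb_sub by (simp add: sum.inter_restrict[OF finV, symmetric] Int_absorb1 Int_def[symmetric] Int_commute)
  finally show ?thesis using assms finV by (simp add: Tf_def laplacian_def)
qed

lemma Tf_inj:
  assumes ne: "V \<noteq> {}" and T0: "\<forall>x\<in>V. Tf v x = 0" and x: "x \<in> V"
  shows "v x = 0"
proof -
  have "(\<Sum>x\<in>V. Tf v x) = 0" using T0 by simp
  then have "real (card V) * (\<Sum>y\<in>V. v y) = 0" by (simp add: Tf_def sum.distrib sum_lap)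
  moreover have "card V > 0" using ne finV by (simp add: card_gt_0_iff)
  ultimately have s0: "(\<Sum>y\<in>V. v y) = 0" by simp
  then have L0: "\<forall>x\<in>V. laplacian E v x = 0" using T0 by (simp add: Tf_def)
  have "\<forall>y\<in>V. v y = v x" using harmonic_const2[OF L0] x by blast
  then have "(\<Sum>y\<in>V. v y) = real (card V) * v x" by simp
  with s0 \<open>card V > 0\<close> show ?thesis by simp
qed

lemma exist_sol:
  assumes ne: "V \<noteq> {}" and sb: "(\<Sum>x\<in>V. b x) = 0"
  shows "\<exists>v. \<forall>x\<in>V. laplacian E v x = b x"
proof -
  define n where "n = card V"
  obtain \<iota> where bij: "bij_betw \<iota> {0..<n} V" using ex_bij_betw_nat_finite[OF finV] n_def by blast
  define A where "A = mat n n (\<lambda>(p,q). cf (\<iota> p) (\<iota> q))"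
  define vec_of where "vec_of = (\<lambda>v::'a\<Rightarrow>real. vec n (\<lambda>q. v (\<iota> q)))"
  define fun_of where "fun_of = (\<lambda>w::real vec. \<lambda>y. w $ (inv_into {0..<n} \<iota> y))"
  have Ac: "A \<in> carrier_mat n n" by (simp add: A_def)
  have inv: "inv_into {0..<n} \<iota> (\<iota> q) = q" if "q < n" for q
    using bij that by (simp add: bij_betw_def inv_into_f_f)
  have vf: "vec_of (fun_of w) = w" if "w \<in> carrier_vec n" for w
    using that by (intro eq_vecI) (auto simp: vec_of_def fun_of_def inv)
  have Av: "(A *\<^sub>v vec_of v) $ p = Tf v (\<iota> p)" if "p < n" for v p
  proof -
    have "(A *\<^sub>v vec_of v) $ p = (\<Sum>q\<in>{0..<n}. cf (\<iota> p) (\<iota> q) * v (\<iota> q))"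
      using that by (simp add: A_def vec_of_def mult_mat_vec_def scalar_prod_def)
    also have "\<dots> = (\<Sum>y\<in>V. cf (\<iota> p) y * v y)"
      by (rule sum.reindex_bij_betw[OF bij])
    also have "\<dots> = Tf v (\<iota> p)" using that bij by (intro cf_sum) (auto simp: bij_betw_def)
    finally show ?thesis .
  qed
  have allV: "\<exists>p<n. x = \<iota> p" if "x \<in> V" for x
    using that bij by (auto simp: bij_betw_def image_iff)
  have "det A \<noteq> 0"
  proof
    assume "det A = 0"
    then obtain w where w: "w \<in> carrier_vec n" "w \<noteq> 0\<^sub>v n" "A *\<^sub>v w = 0\<^sub>v n"
      using det_0_iff_vec_prod_zero[OF Ac] by blast
    have "\<forall>x\<in>V. Tf (fun_of w) x = 0"
    proof
      fix x assume "x \<in> V"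
      then obtain p where p: "p < n" "x = \<iota> p" using allV by blast
      have "Tf (fun_of w) x = (A *\<^sub>v vec_of (fun_of w)) $ p" using Av p by simp
      also have "\<dots> = 0" using w p by (simp add: vf)
      finally show "Tf (fun_of w) x = 0" .
    qed
    then have "fun_of w x = 0" if "x \<in> V" for x using Tf_inj[OF ne] that by blast
    then have "w = 0\<^sub>v n"
    proof -
      assume h: "\<And>x. x \<in> V \<Longrightarrow> fun_of w x = 0"
      have "w = vec_of (fun_of w)" using vf w by simp
      also have "\<dots> = 0\<^sub>v n" using bij h by (intro eq_vecI) (auto simp: vec_of_def bij_betw_def)
      finally show ?thesis .
    qed
    with w show False by simp
  qed
  from det_non_zero_imp_unit[OF Ac this, of undefined]
  obtain B where B: "B \<in> carrier_mat n n" "A * B = 1\<^sub>m n"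
    by (auto simp: Units_def ring_mat_def)
  define w where "w = B *\<^sub>v vec_of b"
  have wc: "w \<in> carrier_vec n" using B by (simp add: w_def vec_of_def)
  have Aw: "A *\<^sub>v w = vec_of b"
    using B Ac by (simp add: w_def assoc_mult_mat_vec[symmetric, of A n n B n] vec_of_def)
  define v where "v = fun_of w"
  have Tv: "Tf v x = b x" if xV: "x \<in> V" for x
  proof -
    obtain p where p: "p < n" "x = \<iota> p" using allV xV by blast
    have "Tf v x = (A *\<^sub>v vec_of v) $ p" using Av p by simp
    also have "\<dots> = b x" using p Aw vf[OF wc] by (simp add: v_def vec_of_def)
    finally show ?thesis .
  qed
  have "(\<Sum>x\<in>V. Tf v x) = 0" using Tv sb by simp
  then have "real (card V) * (\<Sum>y\<in>V. v y) = 0" by (simp add: Tf_def sum.distrib sum_lap)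
  moreover have "card V > 0" using ne finV by (simp add: card_gt_0_iff)
  ultimately have s0: "(\<Sum>y\<in>V. v y) = 0" by simp
  show ?thesis using Tv s0 by (auto simp: Tf_def)
qed

end


lemma real_bound:
  fixes a b c R :: real
  assumes a: "a \<ge> 0" and b: "b \<ge> 0" and c: "c = 0 \<or> c = 1" and R: "R \<ge> 0"
    and H: "\<And>t s. c + a * (1-t)^2 + b * t^2 - 2*s + s^2 * R \<ge> 0"
  shows "R \<ge> (a+b) / ((a+c)*(b+c))"
proof (cases "(a+c)*(b+c) = 0 \<or> a + b = 0")
  case True then show ?thesis using R by auto
next
  case False
  then have ab: "a + b > 0" and ac: "a + c > 0" and bc: "b + c > 0" using a b c by auto
  define t where "t = a/(a+b)"
  define C where "C = c + a*b/(a+b)"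
  have Ct: "c + a * (1-t)^2 + b * t^2 = C"
  proof -
    define k where "k = a + b"
    have k: "k > 0" using ab k_def by simp
    have t1: "1 - t = b / k" unfolding t_def k_def[symmetric] using k by (simp add: field_simps k_def)
    have "a * (b/k)^2 + b * (a/k)^2 = (a*b*b + b*a*a) / (k*k)"
      by (simp add: power_divide power2_eq_square add_divide_distrib)
    also have "a*b*b + b*a*a = a*b*k" unfolding k_def by (simp add: distrib_left)
    finally have "a * (b/k)^2 + b * (a/k)^2 = (a*b*k) / (k*k)" .
    also have "\<dots> = a*b/k" using k by simp
    finally have F: "a * (b/k)^2 + b * (a/k)^2 = a*b/k" .
    have ta: "t = a/k" unfolding t_def k_def ..
    have Ck: "C = c + a*b/k" unfolding C_def k_def ..
    have t2: "1 - a/k = b/k" using t1 ta by simp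
    show ?thesis unfolding Ck ta t2 using F by simp
  qed
  have abn: "a*b/(a+b) \<ge> 0" using a b ab by simp
  have Cpos: "C > 0"
  proof (cases "c = 0")
    case True
    then have "a > 0" "b > 0" using ac bc by auto
    then show ?thesis unfolding C_def using True by simp
  next
    case False
    then have "c = 1" using c by simp
    then show ?thesis unfolding C_def using abn by simp
  qed
  have "C - 2*C + C^2 * R \<ge> 0" using H[of t C] Ct by simp
  then have "C^2 * R \<ge> C" by simp
  then have "C * (C * R) \<ge> C * 1" by (simp add: power2_eq_square algebra_simps)
  then have R1: "C * R \<ge> 1" using Cpos by (simp add: mult_le_cancel_left_pos)
  have "(a+b) / ((a+c)*(b+c)) \<le> (a+b) / (c*(a+b) + a*b)"
  proof (rule divide_left_mono)
    have D1: "c*(a+b) + a*b = C * (a+b)" unfolding C_def using ab by (simp add: field_simps)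
    then have "c*(a+b) + a*b > 0" using Cpos ab by simp
    moreover have "(a+c)*(b+c) > 0" using ac bc by simp
    ultimately show "0 < (a+c)*(b+c) * (c*(a+b) + a*b)" by simp
    have "c * c \<ge> 0" by simp
    then show "c*(a+b) + a*b \<le> (a+c)*(b+c)" by (simp add: algebra_simps)
    show "0 \<le> a + b" using ab by simp
  qed
  also have "\<dots> = 1 / C" unfolding C_def using ab by (simp add: field_simps)
  also have "\<dots> \<le> R" using R1 Cpos by (simp add: field_simps)
  finally show ?thesis .
qed

context cg begin

definition delta :: "'a \<Rightarrow> 'a \<Rightarrow> 'a \<Rightarrow> real" where
  "delta i j x = (if x = i then 1 else 0) - (if x = j then 1 else 0)"

lemma eff_res_sol:
  assumes i: "i \<in> V" and j: "j \<in> V"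
  shows "\<exists>v. (\<forall>x\<in>V. laplacian E v x = delta i j x) \<and> eff_res V E i j = v i - v j"
proof -
  have "(\<Sum>x\<in>V. delta i j x) = 0" using i j finV by (simp add: delta_def sum_subtractf)
  then obtain v where v: "\<forall>x\<in>V. laplacian E v x = delta i j x" using exist_sol i by blast
  have "eff_res V E i j = v i - v j"
    unfolding eff_res_def
  proof (rule the_equality)
    show "\<exists>va. (\<forall>x\<in>V. laplacian E va x = (if x = i then 1 else 0) - (if x = j then 1 else 0)) \<and>
        v i - v j = va i - va j"
    proof -
      have v': "\<forall>x\<in>V. laplacian E v x = (if x = i then 1 else 0) - (if x = j then 1 else 0)"
        using v unfolding delta_def .
      show ?thesis by (rule exI[of _ v], rule conjI[OF v' refl])
    qed
  next
    fix r assume "\<exists>w. (\<forall>x\<in>V. laplacian E w x = (if x = i then 1 else 0) - (if x = j then 1 else 0)) \<and> r = w i - w j"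
    then obtain w where w: "\<forall>x\<in>V. laplacian E w x = delta i j x" "r = w i - w j"
      by (auto simp: delta_def)
    have "\<forall>x\<in>V. laplacian E (\<lambda>x. v x - 1 * w x) x = 0"
    proof
      fix x assume x: "x \<in> V"
      have "laplacian E (\<lambda>x. v x - 1 * w x) x = laplacian E v x - 1 * laplacian E w x" by (rule lap_lin)
      then show "laplacian E (\<lambda>x. v x - 1 * w x) x = 0" using v w x by simp
    qed
    from harmonic_const2[OF this i j] w(2) show "r = v i - v j" by simp
  qed
  with v show ?thesis by blast
qed

lemma Q_delta:
  assumes "\<forall>x\<in>V. laplacian E v x = delta i j x" "i \<in> V" "j \<in> V"
  shows "Q u v = u i - u j"
proof -
  have "Q u v = (\<Sum>x\<in>V. u x * delta i j x)" using assms(1) by (simp add: Q_def)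
  also have "\<dots> = (\<Sum>x\<in>V. (if x = i then u x else 0) - (if x = j then u x else 0))"
    by (rule sum.cong) (auto simp: delta_def)
  also have "\<dots> = u i - u j" using assms finV by (simp add: sum_subtractf)
  finally show ?thesis .
qed

definition tf :: "'a \<Rightarrow> 'a \<Rightarrow> real \<Rightarrow> 'a \<Rightarrow> real" where
  "tf i j t x = (if x = i then 1 else if x = j then 0 else t)"

lemma Q_tf:
  assumes i: "i \<in> V" and j: "j \<in> V" and ij: "i \<noteq> j"
  shows "Q (tf i j t) (tf i j t) = (if j \<in> N i then 1 else 0)
     + real (card (N i - {j})) * (1-t)^2 + real (card (N j - {i})) * t^2"
proof -
  let ?u = "tf i j t"
  let ?c = "(if j \<in> N i then 1 else 0) :: real"
  define h where "h x = (\<Sum>y\<in>N x. (?u x - ?u y) * (?u x - ?u y))" for x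
  have split: "(\<Sum>x\<in>V. h x) = h i + h j + (\<Sum>x\<in>V-{i,j}. h x)"
  proof -
    have "(\<Sum>x\<in>V. h x) = h i + (\<Sum>x\<in>V-{i}. h x)" using i finV by (simp add: sum.remove)
    also have "(\<Sum>x\<in>V-{i}. h x) = h j + (\<Sum>x\<in>V-{i}-{j}. h x)"
      using j ij finV by (subst sum.remove[of _ j]) auto
    finally show ?thesis by (simp add: set_diff_eq insert_commute conj_commute) (metis Diff_insert2 insert_commute)
  qed
  have hi: "h i = ?c + real (card (N i - {j})) * (1-t)^2"
  proof -
    have "h i = (\<Sum>y\<in>N i. (if y = j then 1 else 0) + (if y \<noteq> j then (1-t)^2 else 0))"
      unfolding h_def using nb_irr[of i] ij
      by (intro sum.cong refl) (auto simp: tf_def power2_eq_square)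
    also have "\<dots> = ?c + (\<Sum>y\<in>N i. (if y \<noteq> j then (1-t)^2 else 0))"
      using nb_fin by (simp add: sum.distrib)
    also have "(\<Sum>y\<in>N i. (if y \<noteq> j then (1-t)^2 else 0)) = (\<Sum>y\<in>N i - {j}. (1-t)^2)"
      using nb_fin by (simp add: sum.If_cases Diff_eq Collect_neg_eq[symmetric] Int_def)
    finally show ?thesis by simp
  qed
  have hj: "h j = ?c + real (card (N j - {i})) * t^2"
  proof -
    have "h j = (\<Sum>y\<in>N j. (if y = i then 1 else 0) + (if y \<noteq> i then t^2 else 0))"
      unfolding h_def using nb_irr[of j] ij
      by (intro sum.cong refl) (auto simp: tf_def power2_eq_square)
    also have "\<dots> = ?c + (\<Sum>y\<in>N j. (if y \<noteq> i then t^2 else 0))"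
      using nb_fin nb_sym by (simp add: sum.distrib)
    also have "(\<Sum>y\<in>N j. (if y \<noteq> i then t^2 else 0)) = (\<Sum>y\<in>N j - {i}. t^2)"
      using nb_fin by (simp add: sum.If_cases Diff_eq Collect_neg_eq[symmetric] Int_def)
    finally show ?thesis by simp
  qed
  have hx: "h x = (if x \<in> N i then (1-t)^2 else 0) + (if x \<in> N j then t^2 else 0)"
    if x: "x \<in> V - {i,j}" for x
  proof -
    have tt: "(t - 1) * (t - 1) = (1-t)^2" by (simp add: power2_eq_square algebra_simps)
    have "h x = (\<Sum>y\<in>N x. (if y = i then (1-t)^2 else 0) + (if y = j then t^2 else 0))"
      unfolding h_def using x ij by (intro sum.cong refl) (auto simp: tf_def tt power2_eq_square)
    also have "\<dots> = (if i \<in> N x then (1-t)^2 else 0) + (if j \<in> N x then t^2 else 0)"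
      using nb_fin by (simp add: sum.distrib)
    finally show ?thesis using nb_sym by simp
  qed
  have rest: "(\<Sum>x\<in>V-{i,j}. h x) = real (card (N i - {j})) * (1-t)^2 + real (card (N j - {i})) * t^2"
  proof -
    have "(\<Sum>x\<in>V-{i,j}. h x) = (\<Sum>x\<in>V-{i,j}. (if x \<in> N i then (1-t)^2 else 0))
        + (\<Sum>x\<in>V-{i,j}. (if x \<in> N j then t^2 else 0))"
      using hx by (simp add: sum.distrib)
    also have "(\<Sum>x\<in>V-{i,j}. (if x \<in> N i then (1-t)^2 else 0)) = (\<Sum>x\<in>(V-{i,j}) \<inter> N i. (1-t)^2)"
      by (rule sum.inter_restrict[symmetric]) (simp add: finV)
    also have "(V-{i,j}) \<inter> N i = N i - {j}" using nb_sub nb_irr[of i] by auto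
    also have "(\<Sum>x\<in>V-{i,j}. (if x \<in> N j then t^2 else 0)) = (\<Sum>x\<in>(V-{i,j}) \<inter> N j. t^2)"
      by (rule sum.inter_restrict[symmetric]) (simp add: finV)
    also have "(V-{i,j}) \<inter> N j = N j - {i}" using nb_sub nb_irr[of j] by auto
    finally show ?thesis by simp
  qed
  have "Q ?u ?u = (\<Sum>x\<in>V. h x) / 2" by (simp add: Qform h_def)
  moreover have "(\<Sum>x\<in>V. h x) = 2*?c + 2*(real (card (N i - {j})) * (1-t)^2) + 2*(real (card (N j - {i})) * t^2)"
    using split hi hj rest by linarith
  ultimately show ?thesis by linarith
qed

lemma eff_res_lb:
  assumes i: "i \<in> V" and j: "j \<in> V" and ij: "i \<noteq> j"
  shows "eff_res V E i j \<ge> (real (degree E i) + real (degree E j) - 2 * (if j \<in> N i then 1 else 0))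
      / (real (degree E i) * real (degree E j))"
proof -
  obtain v where v: "\<forall>x\<in>V. laplacian E v x = delta i j x" and R: "eff_res V E i j = v i - v j"
    using eff_res_sol[OF i j] by blast
  define c :: real where "c = (if j \<in> N i then 1 else 0)"
  define a where "a = real (card (N i - {j}))"
  define b where "b = real (card (N j - {i}))"
  have da: "real (degree E i) = a + c"
  proof (cases "j \<in> N i")
    case True
    have "card (N i) = Suc (card (N i - {j}))" by (rule card.remove[OF nb_fin True])
    then have "real (card (N i)) = real (card (N i - {j})) + 1" by (simp only: of_nat_Suc)
    then show ?thesis unfolding a_def c_def Defs.degree_def using True by (simp only: if_P)
  next
    case False
    then have "N i - {j} = N i" by simp
    then show ?thesis unfolding a_def c_def Defs.degree_def using False by simp
  qed
  have db: "real (degree E j) = b + c"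
  proof (cases "i \<in> N j")
    case True
    have "card (N j) = Suc (card (N j - {i}))" by (rule card.remove[OF nb_fin True])
    then have "real (card (N j)) = real (card (N j - {i})) + 1" by (simp only: of_nat_Suc)
    then show ?thesis unfolding b_def c_def Defs.degree_def using True nb_sym[of j i] by (simp only: if_P)
  next
    case False
    then have "N j - {i} = N j" by simp
    then show ?thesis unfolding b_def c_def Defs.degree_def using False nb_sym[of j i] by simp
  qed
  have Qvv: "Q v v = eff_res V E i j" using Q_delta[OF v i j] R by simp
  have R0: "eff_res V E i j \<ge> 0" using Q_nonneg[of v] Qvv by simp
  have H: "c + a * (1-t)^2 + b * t^2 - 2*s + s^2 * eff_res V E i j \<ge> 0" for t s
  proof -
    have "Q (\<lambda>x. tf i j t x - s * v x) (\<lambda>x. tf i j t x - s * v x) \<ge> 0" by (rule Q_nonneg)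
    moreover have "Q (tf i j t) v = 1" using Q_delta[OF v i j] ij by (simp add: tf_def)
    ultimately show ?thesis
      using Q_expand[of "tf i j t" s v] Q_tf[OF i j ij, of t] Qvv
      by (simp add: a_def b_def c_def)
  qed
  have "eff_res V E i j \<ge> (a+b)/((a+c)*(b+c))"
    by (rule real_bound[OF _ _ _ R0 H]) (auto simp: a_def b_def c_def)
  then show ?thesis using da db by (simp add: c_def)
qed

end


lemma pair_sum:
  fixes g :: "'a::linorder \<Rightarrow> 'a \<Rightarrow> real"
  assumes fin: "finite V" and sym: "\<And>i j. i \<in> V \<Longrightarrow> j \<in> V \<Longrightarrow> g i j = g j i"
  shows "(\<Sum>(i,j)\<in>{(i,j). i \<in> V \<and> j \<in> V \<and> i < j}. g i j) = ((\<Sum>i\<in>V. \<Sum>j\<in>V. g i j) - (\<Sum>i\<in>V. g i i)) / 2"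
proof -
  have P: "{(i,j). i \<in> V \<and> j \<in> V \<and> i < j} = Sigma V (\<lambda>i. {j \<in> V. i < j})" by auto
  have A: "(\<Sum>(i,j)\<in>{(i,j). i \<in> V \<and> j \<in> V \<and> i < j}. g i j) = (\<Sum>i\<in>V. \<Sum>j\<in>V. if i < j then g i j else 0)"
    unfolding P using fin by (simp add: sum.Sigma[symmetric] sum.inter_filter)
  have "(\<Sum>i\<in>V. \<Sum>j\<in>V. if j < i then g i j else 0) = (\<Sum>j\<in>V. \<Sum>i\<in>V. if j < i then g i j else 0)"
    by (rule sum.swap)
  also have "\<dots> = (\<Sum>j\<in>V. \<Sum>i\<in>V. if j < i then g j i else 0)"
    by (intro sum.cong refl) (simp add: sym)
  finally have B: "(\<Sum>i\<in>V. \<Sum>j\<in>V. if j < i then g i j else 0) = (\<Sum>i\<in>V. \<Sum>j\<in>V. if i < j then g i j else 0)" .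
  have C: "(\<Sum>i\<in>V. \<Sum>j\<in>V. if i = j then g i j else 0) = (\<Sum>i\<in>V. g i i)" using fin by simp
  have split: "g i j = (if i < j then g i j else 0) + (if j < i then g i j else 0) + (if i = j then g i j else 0)" for i j
    by (cases i j rule: linorder_cases) auto
  have "(\<Sum>i\<in>V. \<Sum>j\<in>V. g i j) = (\<Sum>i\<in>V. \<Sum>j\<in>V. (if i < j then g i j else 0) + (if j < i then g i j else 0) + (if i = j then g i j else 0))"
    by (intro sum.cong refl) (rule split)
  also have "\<dots> = (\<Sum>i\<in>V. \<Sum>j\<in>V. if i < j then g i j else 0) + (\<Sum>i\<in>V. \<Sum>j\<in>V. if j < i then g i j else 0) + (\<Sum>i\<in>V. \<Sum>j\<in>V. if i = j then g i j else 0)"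
    by (simp only: sum.distrib)
  finally have X: "(\<Sum>i\<in>V. \<Sum>j\<in>V. g i j) = 2 * (\<Sum>(i,j)\<in>{(i,j). i \<in> V \<and> j \<in> V \<and> i < j}. g i j) + (\<Sum>i\<in>V. g i i)"
    using A B C by simp
  show ?thesis using X by simp
qed

lemma two_le_ratio: fixes a b :: real assumes "a > 0" "b > 0" shows "b / a + a / b \<ge> 2"
proof -
  have "0 \<le> (a - b)^2" by simp
  then have "2 * (a*b) \<le> a*a + b*b" by (simp add: power2_eq_square algebra_simps)
  moreover have "b / a + a / b = (a*a + b*b) / (a*b)" using assms by (simp add: field_simps)
  ultimately show ?thesis using assms by (simp add: pos_le_divide_eq)
qed

lemma hm_am:
  fixes f :: "'a \<Rightarrow> real"
  assumes fin: "finite A" and pos: "\<forall>x\<in>A. f x > 0"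
  shows "(\<Sum>x\<in>A. 1 / f x) * (\<Sum>x\<in>A. f x) \<ge> real (card A)^2"
proof -
  let ?p = "\<lambda>x y. 1 / f x * f y"
  have "(\<Sum>x\<in>A. 1 / f x) * (\<Sum>x\<in>A. f x) = (\<Sum>x\<in>A. \<Sum>y\<in>A. ?p x y)" by (rule sum_product)
  moreover have "(\<Sum>x\<in>A. \<Sum>y\<in>A. ?p x y) = (\<Sum>x\<in>A. \<Sum>y\<in>A. ?p y x)" by (rule sum.swap)
  moreover have "(\<Sum>x\<in>A. \<Sum>y\<in>A. ?p x y + ?p y x) = (\<Sum>x\<in>A. \<Sum>y\<in>A. ?p x y) + (\<Sum>x\<in>A. \<Sum>y\<in>A. ?p y x)"
    by (simp only: sum.distrib)
  moreover have "(\<Sum>x\<in>A. \<Sum>y\<in>A. ?p x y + ?p y x) \<ge> (\<Sum>x\<in>A. \<Sum>y\<in>A. 2)"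
  proof (intro sum_mono)
    fix x y assume "x \<in> A" "y \<in> A"
    then have "f x > 0" "f y > 0" using pos by auto
    then show "2 \<le> ?p x y + ?p y x" using two_le_ratio[of "f x" "f y"] by simp
  qed
  moreover have "(\<Sum>x\<in>A. \<Sum>y\<in>A. (2::real)) = 2 * real (card A)^2" by (simp add: power2_eq_square)
  ultimately show ?thesis by linarith
qed

context cg begin

lemma deg_pos: assumes "card V \<ge> 2" "x \<in> V" shows "degree E x \<ge> 1"
proof -
  obtain y where y: "y \<in> V" "y \<noteq> x"
  proof -
    have "card (V - {x}) \<ge> 1" using assms finV by (simp add: card_Diff_singleton)
    have "V - {x} \<noteq> {}"
    proof
      assume "V - {x} = {}"
      then have "card (V - {x}) = 0" by (metis card.empty)
      with \<open>card (V - {x}) \<ge> 1\<close> show False by simp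
    qed
    then show ?thesis using that by blast
  qed
  have "(adj E)\<^sup>*\<^sup>* x y" using conn assms(2) y(1) by (simp add: connected_graph_def)
  then obtain z where "adj E x z"
    using y(2) by (metis converse_rtranclpE)
  then have "z \<in> N x" by (simp add: adj_def neighbors_def)
  then have "card (N x) > 0" using nb_fin card_gt_0_iff by blast
  then show ?thesis by (simp add: Defs.degree_def)
qed

lemma handshake: "(\<Sum>x\<in>V. degree E x) = 2 * card E"
proof -
  have finE: "finite E"
  proof -
    have "E \<subseteq> Pow V" using sgr by (auto simp: simple_graph_def)
    then show ?thesis using finV finite_subset by blast
  qed
  define F where "F e = {(x,y). {x,y} = e}" for e :: "'a set"
  have cardF: "card (F e) = 2" if eE: "e \<in> E" for e
  proof -
    obtain a b where e: "e = {a,b}" "a \<noteq> b" using eE sgr unfolding simple_graph_def by blast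
    have "F e = {(a,b),(b,a)}" unfolding F_def e by (auto simp: doubleton_eq_iff)
    then show ?thesis using e by simp
  qed
  have finF: "finite (F e)" if "e \<in> E" for e by (intro card_ge_0_finite) (simp add: cardF[OF that])
  have U: "Sigma V N = (\<Union>e\<in>E. F e)"
    by (auto simp: F_def neighbors_def dest: edge_in)
  have "(\<Sum>x\<in>V. degree E x) = card (Sigma V N)"
    using finV nb_fin by (simp add: Defs.degree_def)
  also have "\<dots> = (\<Sum>e\<in>E. card (F e))"
    unfolding U apply (rule card_UN_disjoint[OF finE]) apply (simp add: finF) apply (auto simp: F_def) done
  also have "\<dots> = 2 * card E" using cardF by simp
  finally show ?thesis .
qed

definition dd :: "'a \<Rightarrow> real" where "dd x = real (degree E x)"

definition gg :: "'a \<Rightarrow> 'a \<Rightarrow> real" where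
  "gg i j = (dd i + dd j) * ((dd i + dd j - 2 * (if j \<in> N i then 1 else 0)) / (dd i * dd j))"

lemma gg_sym: "gg i j = gg j i"
  unfolding gg_def using nb_sym[of i j] by (simp add: algebra_simps)

lemma gg_total:
  assumes dpos: "\<forall>x\<in>V. dd x > 0"
  shows "(\<Sum>i\<in>V. \<Sum>j\<in>V. gg i j) - (\<Sum>i\<in>V. gg i i)
     = 2 * ((\<Sum>x\<in>V. dd x) * (\<Sum>x\<in>V. 1 / dd x)) + 2 * real (card V)^2 - 8 * real (card V)"
proof -
  let ?c = "\<lambda>i j. (if j \<in> N i then 1 else 0) :: real"
  have pt: "gg i j = dd i * (1 / dd j) + dd j * (1 / dd i) + 2 - 2 * (?c i j * (1 / dd i + 1 / dd j))"
    if "i \<in> V" "j \<in> V" for i j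
  proof -
    have "dd i > 0" "dd j > 0" using dpos that by auto
    then show ?thesis unfolding gg_def by (simp add: field_simps power2_eq_square)
  qed
  have diag: "gg i i = 4" if "i \<in> V" for i
  proof -
    have "dd i > 0" using dpos that by auto
    then show ?thesis unfolding gg_def using nb_irr[of i] by (simp add: field_simps)
  qed
  have s1: "(\<Sum>i\<in>V. \<Sum>j\<in>V. dd i * (1 / dd j)) = (\<Sum>x\<in>V. dd x) * (\<Sum>x\<in>V. 1 / dd x)"
    by (rule sum_product[symmetric])
  have s2: "(\<Sum>i\<in>V. \<Sum>j\<in>V. dd j * (1 / dd i)) = (\<Sum>x\<in>V. dd x) * (\<Sum>x\<in>V. 1 / dd x)"
    by (subst sum.swap) (rule sum_product[symmetric])
  have s3: "(\<Sum>i\<in>V. \<Sum>j\<in>V. (2::real)) = 2 * real (card V)^2" by (simp add: power2_eq_square)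
  have inner: "(\<Sum>j\<in>V. ?c i j * (1 / dd i + 1 / dd j)) = (\<Sum>j\<in>N i. 1 / dd i + 1 / dd j)" for i
  proof -
    have "(\<Sum>j\<in>V. ?c i j * (1 / dd i + 1 / dd j)) = (\<Sum>j\<in>V. if j \<in> N i then 1 / dd i + 1 / dd j else 0)"
      by (intro sum.cong refl) simp
    also have "\<dots> = (\<Sum>j\<in>V \<inter> N i. 1 / dd i + 1 / dd j)"
      by (rule sum.inter_restrict[OF finV, symmetric])
    also have "V \<inter> N i = N i" using nb_sub by auto
    finally show ?thesis .
  qed
  have s4: "(\<Sum>i\<in>V. \<Sum>j\<in>V. ?c i j * (1 / dd i + 1 / dd j)) = 2 * real (card V)"
  proof -
    have "(\<Sum>i\<in>V. \<Sum>j\<in>V. ?c i j * (1 / dd i + 1 / dd j)) = (\<Sum>i\<in>V. \<Sum>j\<in>N i. 1 / dd i + 1 / dd j)"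
      using inner by simp
    also have "\<dots> = (\<Sum>i\<in>V. \<Sum>j\<in>N i. 1 / dd i) + (\<Sum>i\<in>V. \<Sum>j\<in>N i. 1 / dd j)"
      by (simp only: sum.distrib)
    also have "(\<Sum>i\<in>V. \<Sum>j\<in>N i. 1 / dd j) = (\<Sum>i\<in>V. \<Sum>j\<in>N i. 1 / dd i)"
      by (rule swap_nb)
    also have "(\<Sum>i\<in>V. \<Sum>j\<in>N i. 1 / dd i) = (\<Sum>i\<in>V. (1::real))"
    proof (intro sum.cong refl)
      fix i assume "i \<in> V"
      then have "dd i > 0" using dpos by auto
      then show "(\<Sum>j\<in>N i. 1 / dd i) = 1" by (simp add: dd_def Defs.degree_def)
    qed
    finally show ?thesis by simp
  qed
  have "(\<Sum>i\<in>V. \<Sum>j\<in>V. gg i j) = (\<Sum>i\<in>V. \<Sum>j\<in>V. dd i * (1 / dd j) + dd j * (1 / dd i) + 2 - 2 * (?c i j * (1 / dd i + 1 / dd j)))"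
    using pt by simp
  also have "\<dots> = (\<Sum>i\<in>V. \<Sum>j\<in>V. dd i * (1 / dd j)) + (\<Sum>i\<in>V. \<Sum>j\<in>V. dd j * (1 / dd i)) + (\<Sum>i\<in>V. \<Sum>j\<in>V. (2::real))
       - 2 * (\<Sum>i\<in>V. \<Sum>j\<in>V. ?c i j * (1 / dd i + 1 / dd j))"
    by (simp only: sum.distrib sum_subtractf sum_distrib_left)
  finally have T: "(\<Sum>i\<in>V. \<Sum>j\<in>V. gg i j) = 2 * ((\<Sum>x\<in>V. dd x) * (\<Sum>x\<in>V. 1 / dd x)) + 2 * real (card V)^2 - 4 * real (card V)"
    using s1 s2 s3 s4 by simp
  have "(\<Sum>i\<in>V. gg i i) = 4 * real (card V)" using diag by simp
  with T show ?thesis by simp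
qed

end


theorem theorem2:
  fixes V :: "'a::linorder set" and E :: "'a set set" and N M :: nat
  assumes "simple_graph V E"
    and "connected_graph V E"
    and "N = card V"
    and "M < N"
    and "M \<le> card {v \<in> V. degree E v = 1}"
  shows "additive_degree_kirchhoff V E \<ge>
    real N * (real N - 4) + 2 * real (card E) *
      (real M + (real N - real M)^2 / (2 * real (card E) - real M))"
proof (cases "card V = 1")
  case True
  then obtain a where V: "V = {a}" by (auto simp: card_1_singleton_iff)
  have P: "{(i, j). i \<in> V \<and> j \<in> V \<and> i < j} = {}" using V by auto
  have "E = {}"
  proof (rule ccontr)
    assume "E \<noteq> {}"
    then obtain e where "e \<in> E" by blast
    then obtain x y where "x \<noteq> y" "x \<in> V" "y \<in> V" using assms(1) unfolding simple_graph_def by blast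
    then show False using V by simp
  qed
  have "M = 0" using assms(3,4) True by simp
  moreover have "additive_degree_kirchhoff V E = 0" unfolding additive_degree_kirchhoff_def P by simp
  ultimately show ?thesis using assms(3) True \<open>E = {}\<close> by simp
next
  case False
  interpret cg V E by unfold_locales (use assms(1,2) in auto)
  have N2: "card V \<ge> 2" using False assms(3,4) by simp
  have dpos: "\<forall>x\<in>V. dd x > 0"
  proof
    fix x assume "x \<in> V"
    then have "degree E x \<ge> 1" by (rule deg_pos[OF N2])
    then show "dd x > 0" by (simp add: dd_def)
  qed
  have dge1: "dd x \<ge> 1" if "x \<in> V" for x using deg_pos[OF N2 that] by (simp add: dd_def)
  define P where "P = {(i, j). i \<in> V \<and> j \<in> V \<and> i < j}"
  define D where "D = (\<Sum>x\<in>V. dd x)"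
  define S where "S = (\<Sum>x\<in>V. 1 / dd x)"
  have lb: "additive_degree_kirchhoff V E \<ge> (\<Sum>(i,j)\<in>P. gg i j)"
    unfolding additive_degree_kirchhoff_def P_def[symmetric]
  proof (rule sum_mono)
    fix p assume "p \<in> P"
    then obtain i j where p: "p = (i,j)" "i \<in> V" "j \<in> V" "i < j" by (auto simp: P_def)
    have "eff_res V E i j \<ge> (real (degree E i) + real (degree E j) - 2 * (if j \<in> neighbors E i then 1 else 0))
      / (real (degree E i) * real (degree E j))" using eff_res_lb p by simp
    then have "(dd i + dd j) * ((dd i + dd j - 2 * (if j \<in> neighbors E i then 1 else 0)) / (dd i * dd j))
        \<le> (dd i + dd j) * eff_res V E i j"
      using dpos p by (intro mult_left_mono) (auto simp: dd_def)
    then show "(case p of (i, j) \<Rightarrow> gg i j) \<le> (case p of (i, j) \<Rightarrow> real (degree E i + degree E j) * eff_res V E i j)"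
      using p by (simp add: gg_def dd_def)
  qed
  have ps: "(\<Sum>(i,j)\<in>P. gg i j) = D * S + real (card V)^2 - 4 * real (card V)"
    unfolding P_def using pair_sum[OF finV, of gg] gg_sym gg_total[OF dpos] by (simp add: D_def S_def)
  have hs: "D = 2 * real (card E)"
    unfolding D_def dd_def using handshake by (metis of_nat_mult of_nat_numeral of_nat_sum)
  obtain Pm where Pm: "Pm \<subseteq> {v \<in> V. degree E v = 1}" "card Pm = M"
    using obtain_subset_with_card_n[OF assms(5)] by metis
  have PmV: "Pm \<subseteq> V" using Pm by auto
  have dPm: "dd x = 1" if "x \<in> Pm" for x using Pm that by (auto simp: dd_def)
  define D' where "D' = (\<Sum>x\<in>V - Pm. dd x)"
  define S' where "S' = (\<Sum>x\<in>V - Pm. 1 / dd x)"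
  have SD: "S = S' + real M" unfolding S_def S'_def
    using sum.subset_diff[OF PmV finV, of "\<lambda>x. 1 / dd x"] dPm Pm(2) by simp
  have DD: "D = D' + real M" unfolding D_def D'_def
    using sum.subset_diff[OF PmV finV, of dd] dPm Pm(2) by simp
  have cd: "card (V - Pm) = N - M" using card_Diff_subset[OF finite_subset[OF PmV finV] PmV] Pm(2) assms(3) by simp
  have cdr: "real N - real M = real (card (V - Pm))" using cd assms(4) by simp
  have D'ge: "D' \<ge> real (card (V - Pm))"
  proof -
    have "(\<Sum>x\<in>V - Pm. (1::real)) \<le> D'" unfolding D'_def by (rule sum_mono) (use dge1 in auto)
    then show ?thesis by simp
  qed
  have D'pos: "D' > 0" using D'ge cd assms(4) by simp
  have hm: "S' * D' \<ge> real (card (V - Pm))^2"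
    unfolding S'_def D'_def by (rule hm_am) (use finV dpos in auto)
  then have S'ge: "S' \<ge> (real N - real M)^2 / D'" using D'pos cdr by (simp add: pos_divide_le_eq)
  have D0: "D \<ge> 0" using hs by simp
  have "D * (real M + (real N - real M)^2 / D') \<le> D * (real M + S')"
    using S'ge D0 by (intro mult_left_mono) auto
  then have key: "D * (real M + (real N - real M)^2 / (D - real M)) \<le> D * S" using DD SD by (simp add: add.commute)
  have "real N * (real N - 4) + 2 * real (card E) * (real M + (real N - real M)^2 / (2 * real (card E) - real M))
      = real N * (real N - 4) + D * (real M + (real N - real M)^2 / (D - real M))" using hs by simp
  also have "\<dots> \<le> real N * (real N - 4) + D * S" using key by simp
  also have "\<dots> = (\<Sum>(i,j)\<in>P. gg i j)" using ps assms(3) by (simp add: power2_eq_square algebra_simps)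
  also have "\<dots> \<le> additive_degree_kirchhoff V E" by (rule lb)
  finally show ?thesis .
qed


end
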